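(* In $\mathsf{HSLat}$, every sub-Heyting semilattice $X$ of a Heyting semilattice $A$ has a centraliser, namely $Z_A(X)=\{a\in A\mid (x\Rightarrow a)=a\text{ and }(a\Rightarrow x)=x\text{ for all }x\in X\}$; hence $\mathsf{HSLat}$ is algebraically cartesian closed. Moreover, if $X$ is a normal subobject of $A$, then $Z_A(X)$ is a normal subobject of $A$.
   Context: A Heyting semilattice is a meet-semilattice with top $1$ and an operation $\Rightarrow$ with $x\wedge y\le z$ iff $x\le y\Rightarrow z$; morphisms preserve $1,\wedge,\Rightarrow$. Subobjects $X,Y\le A$ Huq-commute if there is a morphism $\varphi\colon X\times Y\to A$ with $\varphi(x,1)=x$, $\varphi(1,y)=y$. The centraliser $Z_A(X)$ is the largest subobject of $A$ Huq-commuting with $X$. Normal subobjects of $A$ are kernels, which in $\mathsf{HSLat}$ are exactly the filters (non-empty, $\wedge$-closed, up-closed subsets). A semi-abelian category is algebraically cartesian closed iff centralisers of all subobjects exist. *)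

theory Defs
  imports Main
begin

definition hsl_le :: "('a \<Rightarrow> 'a \<Rightarrow> 'a) \<Rightarrow> 'a \<Rightarrow> 'a \<Rightarrow> bool" where
  "hsl_le m x y \<longleftrightarrow> m x y = x"

definition hsl :: "'a set \<Rightarrow> ('a \<Rightarrow> 'a \<Rightarrow> 'a) \<Rightarrow> ('a \<Rightarrow> 'a \<Rightarrow> 'a) \<Rightarrow> 'a \<Rightarrow> bool" where
  "hsl A m i t \<longleftrightarrow>
     t \<in> A \<and>
     (\<forall>x\<in>A. \<forall>y\<in>A. m x y \<in> A \<and> i x y \<in> A) \<and>
     (\<forall>x\<in>A. \<forall>y\<in>A. \<forall>z\<in>A. m (m x y) z = m x (m y z)) \<and>
     (\<forall>x\<in>A. \<forall>y\<in>A. m x y = m y x) \<and>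
     (\<forall>x\<in>A. m x x = x) \<and>
     (\<forall>x\<in>A. m x t = x) \<and>
     (\<forall>x\<in>A. \<forall>y\<in>A. \<forall>z\<in>A. hsl_le m (m x y) z \<longleftrightarrow> hsl_le m x (i y z))"

definition sub_hsl :: "'a set \<Rightarrow> 'a set \<Rightarrow> ('a \<Rightarrow> 'a \<Rightarrow> 'a) \<Rightarrow> ('a \<Rightarrow> 'a \<Rightarrow> 'a) \<Rightarrow> 'a \<Rightarrow> bool" where
  "sub_hsl X A m i t \<longleftrightarrow> X \<subseteq> A \<and> t \<in> X \<and>
     (\<forall>x\<in>X. \<forall>y\<in>X. m x y \<in> X \<and> i x y \<in> X)"

text \<open>Huq-commutation: a morphism phi : X \<times> Y \<rightarrow> A (componentwise structure on the
  product) with phi(x,1) = x and phi(1,y) = y.\<close>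
definition huq_commute :: "'a set \<Rightarrow> ('a \<Rightarrow> 'a \<Rightarrow> 'a) \<Rightarrow> ('a \<Rightarrow> 'a \<Rightarrow> 'a) \<Rightarrow> 'a \<Rightarrow> 'a set \<Rightarrow> 'a set \<Rightarrow> bool" where
  "huq_commute A m i t X Y \<longleftrightarrow>
     (\<exists>\<phi> :: 'a \<times> 'a \<Rightarrow> 'a.
        (\<forall>x\<in>X. \<forall>y\<in>Y. \<phi> (x, y) \<in> A) \<and>
        \<phi> (t, t) = t \<and>
        (\<forall>x\<in>X. \<forall>y\<in>Y. \<forall>x'\<in>X. \<forall>y'\<in>Y.
            \<phi> (m x x', m y y') = m (\<phi> (x, y)) (\<phi> (x', y')) \<and>
            \<phi> (i x x', i y y') = i (\<phi> (x, y)) (\<phi> (x', y'))) \<and>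
        (\<forall>x\<in>X. \<phi> (x, t) = x) \<and>
        (\<forall>y\<in>Y. \<phi> (t, y) = y))"

definition is_centraliser :: "'a set \<Rightarrow> ('a \<Rightarrow> 'a \<Rightarrow> 'a) \<Rightarrow> ('a \<Rightarrow> 'a \<Rightarrow> 'a) \<Rightarrow> 'a \<Rightarrow> 'a set \<Rightarrow> 'a set \<Rightarrow> bool" where
  "is_centraliser A m i t X Z \<longleftrightarrow>
     sub_hsl Z A m i t \<and> huq_commute A m i t X Z \<and>
     (\<forall>Y. sub_hsl Y A m i t \<and> huq_commute A m i t X Y \<longrightarrow> Y \<subseteq> Z)"

text \<open>Normal subobjects = kernels = filters.\<close>
definition hsl_filter :: "'a set \<Rightarrow> 'a set \<Rightarrow> ('a \<Rightarrow> 'a \<Rightarrow> 'a) \<Rightarrow> bool" where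
  "hsl_filter F A m \<longleftrightarrow> F \<subseteq> A \<and> F \<noteq> {} \<and>
     (\<forall>x\<in>F. \<forall>y\<in>F. m x y \<in> F) \<and>
     (\<forall>x\<in>F. \<forall>y\<in>A. hsl_le m x y \<longrightarrow> y \<in> F)"

definition centraliser_set :: "'a set \<Rightarrow> ('a \<Rightarrow> 'a \<Rightarrow> 'a) \<Rightarrow> 'a set \<Rightarrow> 'a set" where
  "centraliser_set A i X = {a \<in> A. \<forall>x\<in>X. i x a = a \<and> i a x = x}"

end

theory Submission
  imports Defs
begin

locale hloc =
  fixes A m i t
  assumes H: "hsl A m i t"
begin

abbreviation le (infix "\<sqsubseteq>" 50) where "le x y \<equiv> hsl_le m x y"

lemma tA: "t \<in> A" using H unfolding hsl_def by blast
lemma mA[simp]: "x \<in> A \<Longrightarrow> y \<in> A \<Longrightarrow> m x y \<in> A" using H unfolding hsl_def by blast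
lemma iA[simp]: "x \<in> A \<Longrightarrow> y \<in> A \<Longrightarrow> i x y \<in> A" using H unfolding hsl_def by blast
lemma massoc: "x \<in> A \<Longrightarrow> y \<in> A \<Longrightarrow> z \<in> A \<Longrightarrow> m (m x y) z = m x (m y z)"
  using H unfolding hsl_def by blast
lemma mcomm: "x \<in> A \<Longrightarrow> y \<in> A \<Longrightarrow> m x y = m y x" using H unfolding hsl_def by blast
lemma midem[simp]: "x \<in> A \<Longrightarrow> m x x = x" using H unfolding hsl_def by blast
lemma mtop[simp]: "x \<in> A \<Longrightarrow> m x t = x" using H unfolding hsl_def by blast
lemma mtop2[simp]: "x \<in> A \<Longrightarrow> m t x = x" using mcomm tA mtop by metis
lemma adj: "x \<in> A \<Longrightarrow> y \<in> A \<Longrightarrow> z \<in> A \<Longrightarrow> m x y \<sqsubseteq> z \<longleftrightarrow> x \<sqsubseteq> i y z"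
  using H unfolding hsl_def by blast

lemma le_refl: "x \<in> A \<Longrightarrow> x \<sqsubseteq> x" by (simp add: hsl_le_def)
lemma le_antisym: "x \<in> A \<Longrightarrow> y \<in> A \<Longrightarrow> x \<sqsubseteq> y \<Longrightarrow> y \<sqsubseteq> x \<Longrightarrow> x = y"
  by (metis hsl_le_def mcomm)
lemma le_trans: "x \<in> A \<Longrightarrow> y \<in> A \<Longrightarrow> z \<in> A \<Longrightarrow> x \<sqsubseteq> y \<Longrightarrow> y \<sqsubseteq> z \<Longrightarrow> x \<sqsubseteq> z"
  by (metis hsl_le_def massoc)
lemma le_m1: "x \<in> A \<Longrightarrow> y \<in> A \<Longrightarrow> m x y \<sqsubseteq> x"
  by (metis hsl_le_def massoc mcomm midem)
lemma le_m2: "x \<in> A \<Longrightarrow> y \<in> A \<Longrightarrow> m x y \<sqsubseteq> y"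
  by (metis le_m1 mcomm)
lemma le_mI: "x \<in> A \<Longrightarrow> y \<in> A \<Longrightarrow> z \<in> A \<Longrightarrow> z \<sqsubseteq> x \<Longrightarrow> z \<sqsubseteq> y \<Longrightarrow> z \<sqsubseteq> m x y"
  by (metis hsl_le_def massoc)
lemma le_m_iff: "x \<in> A \<Longrightarrow> y \<in> A \<Longrightarrow> z \<in> A \<Longrightarrow> z \<sqsubseteq> m x y \<longleftrightarrow> z \<sqsubseteq> x \<and> z \<sqsubseteq> y"
  by (meson le_mI le_m1 le_m2 le_trans mA)
lemma le_top: "x \<in> A \<Longrightarrow> x \<sqsubseteq> t" by (simp add: hsl_le_def)

lemma yoneda: "p \<in> A \<Longrightarrow> q \<in> A \<Longrightarrow> (\<And>w. w \<in> A \<Longrightarrow> w \<sqsubseteq> p \<longleftrightarrow> w \<sqsubseteq> q) \<Longrightarrow> p = q"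
  by (metis le_antisym le_refl)

lemma le_mono_m: "a \<in> A \<Longrightarrow> b \<in> A \<Longrightarrow> c \<in> A \<Longrightarrow> a \<sqsubseteq> b \<Longrightarrow> m a c \<sqsubseteq> m b c"
  by (meson le_m1 le_m2 le_mI le_trans mA)

lemma mp: "x \<in> A \<Longrightarrow> y \<in> A \<Longrightarrow> m (i x y) x \<sqsubseteq> y"
  using adj le_refl iA by blast

lemma i_top_iff: "x \<in> A \<Longrightarrow> y \<in> A \<Longrightarrow> i x y = t \<longleftrightarrow> x \<sqsubseteq> y"
  by (metis adj le_antisym le_top mtop2 iA tA)

lemma i_t: "x \<in> A \<Longrightarrow> i t x = x"
  by (rule yoneda) (auto simp: adj[symmetric] tA)

lemma i_x_t: "x \<in> A \<Longrightarrow> i x t = t"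
  using i_top_iff le_top tA by blast

lemma i_curry: "x \<in> A \<Longrightarrow> y \<in> A \<Longrightarrow> z \<in> A \<Longrightarrow> i (m x y) z = i x (i y z)"
proof (rule yoneda)
  fix w assume "x \<in> A" "y \<in> A" "z \<in> A" "w \<in> A"
  then show "w \<sqsubseteq> i (m x y) z \<longleftrightarrow> w \<sqsubseteq> i x (i y z)"
  proof -
    have "w \<sqsubseteq> i (m x y) z \<longleftrightarrow> m w (m x y) \<sqsubseteq> z" using adj \<open>x \<in> A\<close> \<open>y \<in> A\<close> \<open>z \<in> A\<close> \<open>w \<in> A\<close> by (metis mA)
    also have "\<dots> \<longleftrightarrow> m (m w x) y \<sqsubseteq> z" using massoc \<open>x \<in> A\<close> \<open>y \<in> A\<close> \<open>w \<in> A\<close> by metis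
    also have "\<dots> \<longleftrightarrow> m w x \<sqsubseteq> i y z" using adj \<open>x \<in> A\<close> \<open>y \<in> A\<close> \<open>z \<in> A\<close> \<open>w \<in> A\<close> by (metis mA)
    also have "\<dots> \<longleftrightarrow> w \<sqsubseteq> i x (i y z)" using adj \<open>x \<in> A\<close> \<open>y \<in> A\<close> \<open>z \<in> A\<close> \<open>w \<in> A\<close> by (metis iA)
    finally show ?thesis .
  qed
qed auto

lemma i_swap: "x \<in> A \<Longrightarrow> y \<in> A \<Longrightarrow> z \<in> A \<Longrightarrow> i x (i y z) = i y (i x z)"
  by (metis i_curry mcomm)

lemma i_meet: "x \<in> A \<Longrightarrow> a \<in> A \<Longrightarrow> b \<in> A \<Longrightarrow> i x (m a b) = m (i x a) (i x b)"
proof (rule yoneda)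
  fix w assume "x \<in> A" "a \<in> A" "b \<in> A" "w \<in> A"
  then show "w \<sqsubseteq> i x (m a b) \<longleftrightarrow> w \<sqsubseteq> m (i x a) (i x b)"
  proof -
    have "w \<sqsubseteq> i x (m a b) \<longleftrightarrow> m w x \<sqsubseteq> m a b" using adj \<open>x \<in> A\<close> \<open>a \<in> A\<close> \<open>b \<in> A\<close> \<open>w \<in> A\<close> by (metis mA)
    also have "\<dots> \<longleftrightarrow> m w x \<sqsubseteq> a \<and> m w x \<sqsubseteq> b" using le_m_iff \<open>x \<in> A\<close> \<open>a \<in> A\<close> \<open>b \<in> A\<close> \<open>w \<in> A\<close> by (metis mA)
    also have "\<dots> \<longleftrightarrow> w \<sqsubseteq> i x a \<and> w \<sqsubseteq> i x b" using adj \<open>x \<in> A\<close> \<open>a \<in> A\<close> \<open>b \<in> A\<close> \<open>w \<in> A\<close> by metis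
    also have "\<dots> \<longleftrightarrow> w \<sqsubseteq> m (i x a) (i x b)" using le_m_iff \<open>x \<in> A\<close> \<open>a \<in> A\<close> \<open>b \<in> A\<close> \<open>w \<in> A\<close> by (metis iA)
    finally show ?thesis .
  qed
qed auto

lemma le_i: "x \<in> A \<Longrightarrow> y \<in> A \<Longrightarrow> y \<sqsubseteq> i x y"
proof -
  assume h: "x \<in> A" "y \<in> A"
  have "m y x \<sqsubseteq> y" using le_m1 h by blast
  thus ?thesis using adj[of y x y] h by blast
qed

lemma i_anti: "a \<in> A \<Longrightarrow> b \<in> A \<Longrightarrow> x \<in> A \<Longrightarrow> a \<sqsubseteq> b \<Longrightarrow> i b x \<sqsubseteq> i a x"
proof -
  assume h: "a \<in> A" "b \<in> A" "x \<in> A" "a \<sqsubseteq> b"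
  have 1: "m a (i b x) \<sqsubseteq> m b (i b x)" using le_mono_m h by (meson iA)
  have 2: "m b (i b x) \<sqsubseteq> x" using mp[of b x] mcomm[of b "i b x"] h by simp
  have "m a (i b x) \<sqsubseteq> x" using le_trans[OF _ _ _ 1 2] h by simp
  hence "m (i b x) a \<sqsubseteq> x" using mcomm[of a "i b x"] h by simp
  thus ?thesis using adj[of "i b x" a x] h by simp
qed

end

context hloc begin

lemma Z_sub:
  assumes X: "sub_hsl X A m i t"
  defines "Z \<equiv> centraliser_set A i X"
  shows "sub_hsl Z A m i t"
proof -
  have XA: "X \<subseteq> A" using X unfolding sub_hsl_def by blast
  have "t \<in> Z" unfolding Z_def centraliser_set_def using tA XA i_t i_x_t by auto
  moreover have "m a b \<in> Z" if "a \<in> Z" "b \<in> Z" for a b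
  proof -
    have a: "a \<in> A" "\<forall>x\<in>X. i x a = a \<and> i a x = x" and b: "b \<in> A" "\<forall>x\<in>X. i x b = b \<and> i b x = x"
      using that unfolding Z_def centraliser_set_def by auto
    show ?thesis unfolding Z_def centraliser_set_def
      using a b XA by (auto simp: i_meet i_curry)
  qed
  moreover have "i a b \<in> Z" if "a \<in> Z" "b \<in> Z" for a b
  proof -
    have a: "a \<in> A" "\<forall>x\<in>X. i x a = a \<and> i a x = x" and b: "b \<in> A" "\<forall>x\<in>X. i x b = b \<and> i b x = x"
      using that unfolding Z_def centraliser_set_def by auto
    have "i x (i a b) = i a b" if "x \<in> X" for x using that a b XA i_swap by auto
    moreover have "i (i a b) x = x" if x: "x \<in> X" for x
    proof -
      have xA: "x \<in> A" using x XA by auto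
      let ?c = "i (i a b) x"
      have "m ?c (i a b) \<sqsubseteq> x" using mp a b xA by (metis iA mcomm)
      moreover have "m ?c b \<sqsubseteq> m ?c (i a b)" using le_i a b xA
        by (metis iA le_mono_m mcomm mA)
      ultimately have "m ?c b \<sqsubseteq> x" using le_trans a b xA by (meson iA mA)
      hence "?c \<sqsubseteq> i b x" using adj a b xA by (meson iA)
      hence "?c \<sqsubseteq> x" using b x by auto
      moreover have "x \<sqsubseteq> ?c" using le_i a b xA by auto
      ultimately show ?thesis using le_antisym a b xA by (meson iA)
    qed
    ultimately show ?thesis unfolding Z_def centraliser_set_def using a b by auto
  qed
  moreover have "Z \<subseteq> A" unfolding Z_def centraliser_set_def by auto
  ultimately show ?thesis unfolding sub_hsl_def by blast
qed

lemma Z_huq: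
  assumes X: "sub_hsl X A m i t"
  defines "Z \<equiv> centraliser_set A i X"
  shows "huq_commute A m i t X Z"
proof -
  have XA: "X \<subseteq> A" using X unfolding sub_hsl_def by blast
  have ZS: "sub_hsl Z A m i t" using Z_sub X Z_def by blast
  have ZA: "Z \<subseteq> A" using ZS unfolding sub_hsl_def by blast
  have Zi: "\<And>y y'. y \<in> Z \<Longrightarrow> y' \<in> Z \<Longrightarrow> i y y' \<in> Z" using ZS unfolding sub_hsl_def by blast
  have Xi: "\<And>y y'. y \<in> X \<Longrightarrow> y' \<in> X \<Longrightarrow> i y y' \<in> X" using X unfolding sub_hsl_def by blast
  have Zp: "\<And>y x. y \<in> Z \<Longrightarrow> x \<in> X \<Longrightarrow> i x y = y \<and> i y x = x"
    unfolding Z_def centraliser_set_def by auto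
  let ?phi = "\<lambda>(x, y). m x y"
  have "?phi (i x x', i y y') = i (?phi (x, y)) (?phi (x', y'))"
    if "x \<in> X" "y \<in> Z" "x' \<in> X" "y' \<in> Z" for x y x' y'
  proof -
    have A: "x \<in> A" "y \<in> A" "x' \<in> A" "y' \<in> A" using that XA ZA by auto
    have "i (m x y) (m x' y') = m (i (m x y) x') (i (m x y) y')" using A by (simp add: i_meet)
    also have "i (m x y) x' = i x x'" using A Zp[OF that(2) Xi[OF that(1,3)]]
      by (metis i_curry mcomm)
    also have "i (m x y) y' = i y y'" using A Zp[OF Zi[OF that(2,4)] that(1)]
      by (metis i_curry)
    finally show ?thesis by simp
  qed
  moreover have "?phi (m x x', m y y') = m (?phi (x, y)) (?phi (x', y'))"
    if "x \<in> X" "y \<in> Z" "x' \<in> X" "y' \<in> Z" for x y x' y'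
  proof -
    have A: "x \<in> A" "y \<in> A" "x' \<in> A" "y' \<in> A" using that XA ZA by auto
    then show ?thesis by (simp add: massoc) (metis mcomm massoc)
  qed
  ultimately show ?thesis unfolding huq_commute_def
    apply (rule_tac x="?phi" in exI)
    using XA ZA tA by (auto intro!: mA)
qed

lemma Z_max:
  assumes X: "sub_hsl X A m i t" and Y: "sub_hsl Y A m i t" and hq: "huq_commute A m i t X Y"
  shows "Y \<subseteq> centraliser_set A i X"
proof
  fix y assume y: "y \<in> Y"
  obtain phi where P: "\<forall>x\<in>X. \<forall>y\<in>Y. \<forall>x'\<in>X. \<forall>y'\<in>Y.
            phi (i x x', i y y') = i (phi (x, y)) (phi (x', y'))"
     "\<forall>x\<in>X. phi (x, t) = x" "\<forall>y\<in>Y. phi (t, y) = y"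
    using hq unfolding huq_commute_def by blast
  have XA: "X \<subseteq> A" "t \<in> X" using X unfolding sub_hsl_def by auto
  have YA: "Y \<subseteq> A" "t \<in> Y" using Y unfolding sub_hsl_def by auto
  have "i x y = y \<and> i y x = x" if x: "x \<in> X" for x
  proof -
    have xA: "x \<in> A" and yA: "y \<in> A" using x y XA YA by auto
    have "phi (i x t, i t y) = i (phi (x, t)) (phi (t, y))" using P(1) x y XA YA by blast
    hence 1: "i x y = y" using P x y XA YA xA yA i_t i_x_t by simp
    have "phi (i t x, i y t) = i (phi (t, y)) (phi (x, t))" using P(1) x y XA YA by blast
    hence 2: "i y x = x" using P x y XA YA xA yA i_t i_x_t by simp
    show ?thesis using 1 2 by simp
  qed
  then show "y \<in> centraliser_set A i X" unfolding centraliser_set_def using y YA by auto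
qed

lemma Z_filter:
  assumes X: "sub_hsl X A m i t" and F: "hsl_filter X A m"
  shows "hsl_filter (centraliser_set A i X) A m"
proof -
  define Z where "Z = centraliser_set A i X"
  have ZS: "sub_hsl Z A m i t" using Z_sub X Z_def by blast
  have XA: "X \<subseteq> A" using X unfolding sub_hsl_def by auto
  have Fup: "\<And>x y. x \<in> X \<Longrightarrow> y \<in> A \<Longrightarrow> x \<sqsubseteq> y \<Longrightarrow> y \<in> X" using F unfolding hsl_filter_def by blast
  have "b \<in> Z" if a: "a \<in> Z" and b: "b \<in> A" and ab: "a \<sqsubseteq> b" for a b
  proof -
    have aA: "a \<in> A" and ap: "\<forall>x\<in>X. i x a = a \<and> i a x = x" using a unfolding Z_def centraliser_set_def by auto
    have "i x b = b \<and> i b x = x" if x: "x \<in> X" for x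
    proof -
      have xA: "x \<in> A" using x XA by auto
      have "i b x \<sqsubseteq> i a x" using i_anti aA b xA ab by blast
      hence "i b x \<sqsubseteq> x" using ap x by simp
      hence 1: "i b x = x" using le_i le_antisym b xA by (meson iA)
      let ?c = "i x b"
      have "m ?c x \<sqsubseteq> b" using mp xA b by blast
      hence "m x ?c \<sqsubseteq> b" using mcomm xA b by (metis iA)
      hence "x \<sqsubseteq> i ?c b" using adj xA b by (meson iA)
      hence yX: "i ?c b \<in> X" using Fup x xA b by (meson iA)
      hence "i a (i ?c b) = i ?c b" using ap by blast
      moreover have "i a (i ?c b) = t"
      proof -
        have "m a ?c \<sqsubseteq> a" using le_m1 aA xA b by (meson iA)
        hence "m a ?c \<sqsubseteq> b" using le_trans ab aA xA b by (meson iA mA)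
        hence "a \<sqsubseteq> i ?c b" using adj aA xA b by (meson iA)
        thus ?thesis using i_top_iff aA xA b by (meson iA)
      qed
      ultimately have "i ?c b = t" by simp
      hence "?c \<sqsubseteq> b" using i_top_iff[of ?c b] xA b by simp
      moreover have "b \<sqsubseteq> ?c" using le_i xA b by blast
      ultimately have "?c = b" using le_antisym xA b by (meson iA)
      with 1 show ?thesis by simp
    qed
    thus ?thesis unfolding Z_def centraliser_set_def using b by auto
  qed
  moreover have "Z \<subseteq> A" "t \<in> Z" "\<forall>x\<in>Z. \<forall>y\<in>Z. m x y \<in> Z" using ZS unfolding sub_hsl_def by auto
  ultimately show ?thesis unfolding hsl_filter_def Z_def[symmetric] by blast
qed

end

theorem mainTheorem18:
  assumes "hsl A m i t"
  shows "(\<forall>X. sub_hsl X A m i t \<longrightarrow>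
            is_centraliser A m i t X (centraliser_set A i X) \<and>
            (hsl_filter X A m \<longrightarrow> hsl_filter (centraliser_set A i X) A m))"
proof (intro allI impI conjI)
  interpret hloc A m i t using assms by unfold_locales
  fix X assume X: "sub_hsl X A m i t"
  show "is_centraliser A m i t X (centraliser_set A i X)"
    unfolding is_centraliser_def using Z_sub[OF X] Z_huq[OF X] Z_max[OF X] by blast
  show "hsl_filter (centraliser_set A i X) A m" if "hsl_filter X A m"
    using Z_filter[OF X that] .
qed

end
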